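(* (a) For the star graph $S_n$ on $n\ge 2$ vertices (one center adjacent to $n-1$ leaves), $\gamma(S_n)=\dfrac{n}{2n-3}$. (b) For the complete bipartite graph $K_{m,n}$ with part sizes $m\ge n\ge 1$, $\gamma(K_{m,n})=\dfrac{m+n}{2m+n-2}$.
   Context: For a finite simple undirected graph $G$ with $N$ vertices, let $\mathcal{F}=\{x\in\mathbb{R}^{V(G)} : \sum_{v} x_v = 0,\ \|x\|_\infty = 1\}$, for $x\in\mathcal{F}$ let $\gamma_x(G)=\max_{uv\in E(G)}|x_u-x_v|$, and $\gamma(G)=\min_{x\in\mathcal{F}}\gamma_x(G)$. *)

theory Defs
  imports Complex_Main
begin

text \<open>A finite simple undirected graph is given by a finite vertex set V and a
symmetric irreflexive adjacency relation E on V.  Vectors in R^V are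
functions 'a => real (values outside V are irrelevant).\<close>

definition simple_graph :: "'a set \<Rightarrow> ('a \<Rightarrow> 'a \<Rightarrow> bool) \<Rightarrow> bool" where
  "simple_graph V E \<longleftrightarrow> finite V \<and> (\<forall>u v. E u v \<longrightarrow> u \<in> V \<and> v \<in> V)
     \<and> (\<forall>u v. E u v \<longrightarrow> E v u) \<and> (\<forall>v. \<not> E v v)"

definition sup_norm_on :: "'a set \<Rightarrow> ('a \<Rightarrow> real) \<Rightarrow> real" where
  "sup_norm_on V x = Max ((\<lambda>v. \<bar>x v\<bar>) ` V)"

definition feasible :: "'a set \<Rightarrow> ('a \<Rightarrow> real) set" where
  "feasible V = {x. (\<Sum>v\<in>V. x v) = 0 \<and> sup_norm_on V x = 1}"

definition gamma_x :: "'a set \<Rightarrow> ('a \<Rightarrow> 'a \<Rightarrow> bool) \<Rightarrow> ('a \<Rightarrow> real) \<Rightarrow> real" where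
  "gamma_x V E x = Max {\<bar>x u - x v\<bar> | u v. u \<in> V \<and> v \<in> V \<and> E u v}"

text \<open>gamma(G) = min over feasible x of gamma_x(G); rendered as the infimum
(the paper asserts the minimum is attained).\<close>
definition gamma :: "'a set \<Rightarrow> ('a \<Rightarrow> 'a \<Rightarrow> bool) \<Rightarrow> real" where
  "gamma V E = Inf (gamma_x V E ` feasible V)"

definition star_V :: "nat \<Rightarrow> nat set" where "star_V n = {0..<n}"
definition star_E :: "nat \<Rightarrow> nat \<Rightarrow> nat \<Rightarrow> bool" where
  "star_E n u v \<longleftrightarrow> u < n \<and> v < n \<and> ((u = 0 \<and> v \<noteq> 0) \<or> (v = 0 \<and> u \<noteq> 0))"

definition kbip_V :: "nat \<Rightarrow> nat \<Rightarrow> nat set" where "kbip_V m n = {0..<m+n}"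
definition kbip_E :: "nat \<Rightarrow> nat \<Rightarrow> nat \<Rightarrow> nat \<Rightarrow> bool" where
  "kbip_E m n u v \<longleftrightarrow> u < m + n \<and> v < m + n \<and> ((u < m \<and> m \<le> v) \<or> (v < m \<and> m \<le> u))"

end

theory Submission
  imports Defs
begin

lemma core:
  fixes y :: "'a \<Rightarrow> real"
  assumes fA: "finite A" and fB: "finite B" and dj: "A \<inter> B = {}" and w: "w \<in> A" and yw: "y w = 1"
    and Bne: "B \<noteq> {}"
    and gap: "\<And>a b. a\<in>A \<Longrightarrow> b\<in>B \<Longrightarrow> \<bar>y a - y b\<bar> \<le> G" and s: "sum y (A \<union> B) = 0"
  shows "real (card A) + real (card B) \<le> G * (2*real (card A) + real (card B) - 2)"
proof -
  obtain b0 where b0: "b0 \<in> B" using Bne by auto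
  have hb: "y b \<ge> 1 - G" if "b \<in> B" for b
    using gap[OF w that] yw by (simp add: abs_le_iff)
  have ha: "y a \<ge> 1 - 2*G" if "a \<in> A" for a
    using gap[OF that b0] hb[OF b0] by (simp add: abs_le_iff)
  have cA: "card A \<ge> 1" using w fA by (metis One_nat_def Suc_leI card_gt_0_iff empty_iff)
  have s1: "sum y A = y w + sum y (A - {w})" using sum.remove[OF fA w] .
  have s2: "real (card (A - {w})) * (1 - 2*G) \<le> sum y (A - {w})"
    by (rule sum_bounded_below) (use ha in auto)
  have c2: "real (card (A - {w})) = real (card A) - 1" using cA w fA by (simp add: of_nat_diff)
  have s3: "real (card B) * (1 - G) \<le> sum y B"
    by (rule sum_bounded_below) (use hb in auto)
  have s4: "sum y (A \<union> B) = sum y A + sum y B" using sum.union_disjoint[OF fA fB dj] .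
  have "0 \<ge> 1 + (real (card A) - 1) * (1 - 2*G) + real (card B) * (1 - G)"
    using s s1 s2[unfolded c2] s3 s4 yw by linarith
  then show ?thesis by (simp add: algebra_simps)
qed

lemma bip:
  fixes A B :: "'a set" and E
  assumes fA: "finite A" and fB: "finite B" and dj: "A \<inter> B = {}" and cA: "card A = m"
    and cB: "card B = n" and mn: "n \<le> m" "1 \<le> n"
    and E: "\<And>u v. E u v \<longleftrightarrow> (u\<in>A \<and> v\<in>B) \<or> (u\<in>B \<and> v\<in>A)"
  shows "gamma (A \<union> B) E = real (m+n) / (2*real m + real n - 2)"
proof -
  define D where "D = 2*real m + real n - 2"
  define g where "g = real (m+n) / D"
  have Dpos: "D > 0" using mn unfolding D_def by simp
  have gD: "g * D = real m + real n" unfolding g_def using Dpos by simp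
  have g0: "g \<ge> 0" unfolding g_def using Dpos by simp
  have Ane: "A \<noteq> {}" and Bne: "B \<noteq> {}" using cA cB mn by auto
  let ?V = "A \<union> B"
  have fV: "finite ?V" using fA fB by simp
  have edgeset_fin: "finite {\<bar>x u - x v\<bar> | u v. u \<in> ?V \<and> v \<in> ?V \<and> E u v}" for x :: "'a \<Rightarrow> real"
  proof -
    have "{\<bar>x u - x v\<bar> | u v. u \<in> ?V \<and> v \<in> ?V \<and> E u v} \<subseteq> (\<lambda>(u,v). \<bar>x u - x v\<bar>) ` (?V \<times> ?V)"
      by auto
    then show ?thesis using fV finite_subset by blast
  qed
  have gx_ge: "\<bar>x a - x b\<bar> \<le> gamma_x ?V E x" if "a \<in> A" "b \<in> B" for x a b
    unfolding gamma_x_def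
    by (rule Max_ge[OF edgeset_fin]) (use that E in blast)
  have lower: "g \<le> gamma_x ?V E x" if xf: "x \<in> feasible ?V" for x
  proof -
    let ?G = "gamma_x ?V E x"
    have sx: "sum x ?V = 0" and nx: "Max ((\<lambda>v. \<bar>x v\<bar>) ` ?V) = 1"
      using xf unfolding feasible_def sup_norm_on_def by auto
    have "1 \<in> (\<lambda>v. \<bar>x v\<bar>) ` ?V" using nx fV Ane by (metis Max_in finite_imageI image_is_empty sup_eq_bot_iff)
    then obtain w where w: "w \<in> ?V" "\<bar>x w\<bar> = 1" by (metis imageE)
    obtain y where y: "y w = 1" "sum y ?V = 0" "\<And>a b. a\<in>A \<Longrightarrow> b\<in>B \<Longrightarrow> \<bar>y a - y b\<bar> \<le> ?G"
    proof (cases "x w = 1")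
      case True then show ?thesis using that[of x] sx gx_ge by blast
    next
      case False
      then have "x w = -1" using w by auto
      moreover have "sum (\<lambda>v. - x v) ?V = 0" using sx by (simp add: sum_negf)
      moreover have "\<bar>- x a - - x b\<bar> \<le> ?G" if "a\<in>A" "b\<in>B" for a b
        using gx_ge[OF that, of x] by simp
      ultimately show ?thesis using that[of "\<lambda>v. - x v"] by auto
    qed
    obtain a0 b0 where a0: "a0 \<in> A" and b0: "b0 \<in> B" using Ane Bne by auto
    have G0: "?G \<ge> 0" using y(3)[OF a0 b0] by linarith
    show ?thesis
    proof (cases "w \<in> A")
      case True
      have "real m + real n \<le> ?G * D"
        using core[OF fA fB dj True y(1) Bne y(3) y(2)] cA cB unfolding D_def by simp
      then show ?thesis unfolding g_def using Dpos by (simp add: divide_le_eq mult.commute)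
    next
      case False
      then have wB: "w \<in> B" using w by auto
      have dj': "B \<inter> A = {}" using dj by auto
      have "real n + real m \<le> ?G * (2 * real n + real m - 2)"
      proof -
        have g': "\<bar>y b - y a\<bar> \<le> ?G" if "b \<in> B" "a \<in> A" for a b
          using y(3)[OF that(2,1)] by (simp add: abs_minus_commute)
        have s': "sum y (B \<union> A) = 0" using y(2) by (simp add: Un_commute)
        show ?thesis using core[OF fB fA dj' wB y(1) Ane g' s'] cA cB by simp
      qed
      also have "\<dots> \<le> ?G * D" unfolding D_def using G0 mn by (intro mult_left_mono) auto
      finally show ?thesis unfolding g_def using Dpos by (simp add: divide_le_eq mult.commute)
    qed
  qed
  obtain a0 b0 where a0: "a0 \<in> A" and b0: "b0 \<in> B" using Ane Bne by auto
  define x where "x v = (if v = a0 then 1 else if v \<in> A then 1 - 2*g else 1 - g)" for v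
  have g2: "g \<le> 2"
  proof -
    have "real m + real n \<le> 2 * D" unfolding D_def using mn by simp
    then show ?thesis unfolding g_def using Dpos by (simp add: pos_divide_le_eq)
  qed
  have g1: "g \<le> 1" if "m \<ge> 2"
  proof -
    have "real m + real n \<le> D" unfolding D_def using that by simp
    then show ?thesis unfolding g_def using Dpos by (simp add: pos_divide_le_eq)
  qed
  have cA1: "card (A - {a0}) = m - 1" using cA a0 fA by simp
  have xf: "x \<in> feasible ?V"
  proof -
    have sA: "sum x A = 1 + real (m - 1) * (1 - 2*g)"
    proof -
      have "sum x A = x a0 + sum x (A - {a0})" using sum.remove[OF fA a0] .
      also have "sum x (A - {a0}) = sum (\<lambda>_. 1 - 2*g) (A - {a0})"
        by (rule sum.cong) (auto simp: x_def)
      finally show ?thesis using cA1 by (simp add: x_def)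
    qed
    have sB: "sum x B = real n * (1 - g)"
    proof -
      have "sum x B = sum (\<lambda>_. 1 - g) B" by (rule sum.cong) (use dj a0 in \<open>auto simp: x_def\<close>)
      then show ?thesis using cB by simp
    qed
    have m1: "real (m - 1) = real m - 1" using mn by (simp add: of_nat_diff)
    have "sum x ?V = 0"
      using sum.union_disjoint[OF fA fB dj, of x] sA sB m1 gD unfolding D_def
      by (simp add: algebra_simps)
    moreover have "Max ((\<lambda>v. \<bar>x v\<bar>) ` ?V) = 1"
    proof (rule Max_eqI)
      show "finite ((\<lambda>v. \<bar>x v\<bar>) ` ?V)" using fV by simp
      show "1 \<in> (\<lambda>v. \<bar>x v\<bar>) ` ?V" using a0 by (force simp: x_def)
      fix z assume "z \<in> (\<lambda>v. \<bar>x v\<bar>) ` ?V"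
      then obtain v where v: "v \<in> ?V" "z = \<bar>x v\<bar>" by auto
      show "z \<le> 1"
      proof (cases "v = a0")
        case True then show ?thesis using v by (simp add: x_def)
      next
        case False
        show ?thesis
        proof (cases "v \<in> A")
          case True
          have "a0 \<in> A - {v}" using a0 False by auto
          then have "card (A - {v}) \<ge> 1" using fA by (metis One_nat_def Suc_leI card_gt_0_iff empty_iff finite_Diff)
          then have "m \<ge> 2" using cA True fA by simp
          then show ?thesis using g1 g0 v False True by (simp add: x_def abs_le_iff)
        next
          case False
          then show ?thesis using g2 g0 v \<open>v \<noteq> a0\<close> by (simp add: x_def abs_le_iff)
        qed
      qed
    qed
    ultimately show ?thesis unfolding feasible_def sup_norm_on_def by simp
  qed
  have gxx: "gamma_x ?V E x = g"
    unfolding gamma_x_def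
  proof (rule Max_eqI)
    show "finite {\<bar>x u - x v\<bar> | u v. u \<in> ?V \<and> v \<in> ?V \<and> E u v}" by (rule edgeset_fin)
    have "b0 \<noteq> a0" "b0 \<notin> A" using a0 b0 dj by auto
    then have "\<bar>x a0 - x b0\<bar> = g" using g0 by (simp add: x_def)
    then show "g \<in> {\<bar>x u - x v\<bar> | u v. u \<in> ?V \<and> v \<in> ?V \<and> E u v}"
      using a0 b0 E by blast
    fix z assume "z \<in> {\<bar>x u - x v\<bar> | u v. u \<in> ?V \<and> v \<in> ?V \<and> E u v}"
    then obtain u v where uv: "z = \<bar>x u - x v\<bar>" "E u v" by auto
    have "\<bar>x a - x b\<bar> \<le> g" if "a \<in> A" "b \<in> B" for a b
    proof -
      have "b \<noteq> a0" "b \<notin> A" using that a0 dj by auto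
      then show ?thesis using g0 by (auto simp: x_def)
    qed
    then show "z \<le> g" using uv E by (metis abs_minus_commute)
  qed
  have "gamma ?V E = g"
    unfolding gamma_def
    by (rule cInf_eq_minimum) (use xf gxx lower in auto)
  then show ?thesis unfolding g_def D_def .
qed

theorem corollary3p5:
  shows "(\<forall>n::nat. n \<ge> 2 \<longrightarrow>
           gamma (star_V n) (star_E n) = real n / (2 * real n - 3))
       \<and> (\<forall>m n::nat. m \<ge> n \<and> n \<ge> 1 \<longrightarrow>
           gamma (kbip_V m n) (kbip_E m n) = real (m + n) / (2 * real m + real n - 2))"
proof (intro conjI allI impI)
  fix n :: nat assume n: "n \<ge> 2"
  have V: "star_V n = {1..<n} \<union> {0}" unfolding star_V_def using n by auto
  have "gamma ({1..<n} \<union> {0}) (star_E n) = real ((n-1)+1) / (2*real (n-1) + real (1::nat) - 2)"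
    by (rule bip) (use n in \<open>auto simp: star_E_def\<close>)
  then show "gamma (star_V n) (star_E n) = real n / (2 * real n - 3)"
    using n by (simp add: V of_nat_diff algebra_simps)
next
  fix m n :: nat assume mn: "m \<ge> n \<and> n \<ge> 1"
  have V: "kbip_V m n = {0..<m} \<union> {m..<m+n}" unfolding kbip_V_def by auto
  show "gamma (kbip_V m n) (kbip_E m n) = real (m + n) / (2 * real m + real n - 2)"
    unfolding V by (rule bip) (use mn in \<open>auto simp: kbip_E_def\<close>)
qed

end
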